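(* For all integers $n, k \geq 1$ with $n \geq k$, $$\sum_{i=k}^{n} \frac{s(n-1,i-1)\, S(i,k)}{i} = \frac{1}{n}\binom{n}{k} B_{n-k}^*.$$
   Context: For $n \geq 0$, $X^{\underline{n}} := X(X-1)\cdots(X-n+1)$ ($X^{\underline{0}}=1$). The (signed) Stirling numbers of the first kind $s(n,k)$ are defined by $X^{\underline{n}} = \sum_{k=0}^{n} s(n,k) X^k$, and the Stirling numbers of the second kind $S(n,k)$ by $X^n = \sum_{k=0}^{n} S(n,k) X^{\underline{k}}$ (for all $n\ge 0$), with $s(n,k)=S(n,k)=0$ when $n<k$. The Bernoulli numbers of the second kind $B_n^*$ are defined by $\frac{t}{\log(1+t)} = \sum_{n \ge 0} B_n^* \frac{t^n}{n!}$. *)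

theory Defs
  imports "HOL-Combinatorics.Stirling" "HOL-Computational_Algebra.Computational_Algebra"
begin

definition falling_poly :: "nat \<Rightarrow> int poly" where
  "falling_poly n = (\<Prod>i<n. [:- of_nat i, 1:])"

definition stirling1s :: "nat \<Rightarrow> nat \<Rightarrow> int" where
  "stirling1s n k = coeff (falling_poly n) k"

text \<open>Bernoulli numbers of the second kind: t / log(1+t) = sum B*_n t^n / n!.
  fps_ln 1 is the formal series of log(1+t).\<close>
definition bernoulli2 :: "nat \<Rightarrow> real" where
  "bernoulli2 n = fact n * ((fps_X / fps_ln (1::real)) $ n)"

end

theory Submission imports Defs begin

lemma fp_Suc: "falling_poly (Suc m) = [:- of_nat m, 1:] * falling_poly m"
  by (simp add: falling_poly_def lessThan_Suc)

lemma s_0: "stirling1s 0 j = (if j = 0 then 1 else 0)"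
  by (simp add: stirling1s_def falling_poly_def coeff_1)

lemma s_Suc_0: "stirling1s (Suc m) 0 = - of_nat m * stirling1s m 0"
  by (simp add: stirling1s_def fp_Suc mult_pCons_left)

lemma s_Suc_Suc: "stirling1s (Suc m) (Suc j) = stirling1s m j - of_nat m * stirling1s m (Suc j)"
  by (simp add: stirling1s_def fp_Suc mult_pCons_left)

lemma s_gt: "m < j \<Longrightarrow> stirling1s m j = 0"
proof (induction m arbitrary: j)
  case 0 then show ?case by (simp add: s_0)
next
  case (Suc m)
  then obtain j' where "j = Suc j'" by (cases j) auto
  with Suc show ?case by (simp add: s_Suc_Suc)
qed

lemma s_Suc_0': "stirling1s (Suc m) 0 = 0"
  by (induction m) (simp_all add: s_Suc_0 s_0)

lemma L_sub: "subdegree (fps_ln (1::real)) = 1"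
  by (rule subdegreeI) (auto simp: fps_ln_nth)

lemma GL: "fps_X / fps_ln (1::real) * fps_ln 1 = fps_X"
proof -
  have "fps_ln (1::real) \<noteq> 0" using L_sub by auto
  then have "fps_ln (1::real) dvd fps_X" by (subst fps_dvd_iff) (auto simp: L_sub)
  then show ?thesis by simp
qed

lemma Lderiv: "(1 + fps_X) * fps_deriv (fps_ln (1::real) ^ Suc j) = fps_const (real (Suc j)) * fps_ln 1 ^ j"
proof -
  have inv: "(1 + fps_X) * inverse (1 + fps_X :: real fps) = 1"
    by (rule inverse_mult_eq_1') simp
  have "fps_deriv (fps_ln (1::real) ^ Suc j) = fps_const (real (Suc j)) * inverse (1 + fps_X) * fps_ln 1 ^ j"
    by (simp only: fps_deriv_power fps_ln_deriv) simp
  then have "(1 + fps_X) * fps_deriv (fps_ln (1::real) ^ Suc j)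
     = fps_const (real (Suc j)) * ((1 + fps_X) * inverse (1 + fps_X)) * fps_ln 1 ^ j"
    by (simp add: ac_simps)
  also have "\<dots> = fps_const (real (Suc j)) * fps_ln 1 ^ j" by (simp only: inv) simp
  finally show ?thesis .
qed

lemma Lcoeff_rec: "real (Suc m) * (fps_ln (1::real) ^ Suc j) $ Suc m + real m * (fps_ln 1 ^ Suc j) $ m
   = real (Suc j) * (fps_ln 1 ^ j) $ m"
proof -
  define F where "F = fps_deriv (fps_ln (1::real) ^ Suc j)"
  have "((1 + fps_X) * F) $ m = (fps_const (real (Suc j)) * fps_ln 1 ^ j) $ m"
    unfolding F_def by (simp only: Lderiv)
  also have "\<dots> = real (Suc j) * (fps_ln 1 ^ j) $ m" by simp
  finally have e: "F $ m + (fps_X * F) $ m = real (Suc j) * (fps_ln 1 ^ j) $ m"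
    by (simp add: distrib_right)
  have Fk: "F $ k = real (Suc k) * (fps_ln (1::real) ^ Suc j) $ Suc k" for k
    unfolding F_def by (simp only: fps_deriv_nth) simp
  show ?thesis
  proof (cases m)
    case 0 then show ?thesis using e by (simp add: Fk)
  next
    case (Suc m') then show ?thesis using e by (simp add: Fk)
  qed
qed

lemma F1: "fact m * (fps_ln (1::real) ^ j) $ m = fact j * real_of_int (stirling1s m j)"
proof (induction m arbitrary: j)
  case 0
  then show ?case by (cases j) (simp_all add: s_0)
next
  case (Suc m)
  show ?case
  proof (cases j)
    case 0
    then show ?thesis by (simp add: s_Suc_0')
  next
    case (Suc j')
    have r: "real (Suc m) * (fps_ln (1::real) ^ Suc j') $ Suc m
       = real (Suc j') * (fps_ln 1 ^ j') $ m - real m * (fps_ln 1 ^ Suc j') $ m"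
      using Lcoeff_rec[of m j'] by linarith
    have "fact (Suc m) * (fps_ln (1::real) ^ j) $ Suc m = fact m * (real (Suc m) * (fps_ln (1::real) ^ Suc j') $ Suc m)"
      by (simp add: Suc)
    also have "\<dots> = real (Suc j') * (fact m * (fps_ln 1 ^ j') $ m) - real m * (fact m * (fps_ln 1 ^ Suc j') $ m)"
      by (simp only: r) (simp add: algebra_simps)
    also have "\<dots> = real (Suc j') * (fact j' * real_of_int (stirling1s m j')) - real m * (fact (Suc j') * real_of_int (stirling1s m (Suc j')))"
      by (simp only: Suc.IH)
    also have "\<dots> = fact j * real_of_int (stirling1s (Suc m) j)"
      by (simp add: Suc s_Suc_Suc algebra_simps)
    finally show ?thesis .
  qed
qed

lemma F2: "(\<Sum>i\<le>m. real_of_int (stirling1s m i) * real (Stirling i k)) = (if m = k then 1 else 0)"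
proof (induction m arbitrary: k)
  case 0
  then show ?case by (cases k) (simp_all add: s_0)
next
  case (Suc m)
  define T where "T = (\<Sum>i\<le>m. real_of_int (stirling1s m i) * real (Stirling (Suc i) k))"
  have A: "(\<Sum>i\<le>Suc m. real_of_int (stirling1s m i) * real (Stirling i k)) = (if m = k then 1 else 0)"
    using Suc.IH[of k] by (simp add: s_gt)
  have "(\<Sum>i\<le>Suc m. real_of_int (stirling1s (Suc m) i) * real (Stirling i k))
     = real_of_int (stirling1s (Suc m) 0) * real (Stirling 0 k) + (\<Sum>i\<le>m. real_of_int (stirling1s (Suc m) (Suc i)) * real (Stirling (Suc i) k))"
    by (rule sum.atMost_Suc_shift)
  also have "\<dots> = T - real m * (real_of_int (stirling1s m 0) * real (Stirling 0 k) + (\<Sum>i\<le>m. real_of_int (stirling1s m (Suc i)) * real (Stirling (Suc i) k)))"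
    by (simp add: s_Suc_0 s_Suc_Suc T_def algebra_simps sum_subtractf sum_distrib_left)
  also have "(real_of_int (stirling1s m 0) * real (Stirling 0 k) + (\<Sum>i\<le>m. real_of_int (stirling1s m (Suc i)) * real (Stirling (Suc i) k)))
     = (if m = k then 1 else 0)"
    using A by (simp only: sum.atMost_Suc_shift)
  also have "T - real m * (if m = k then 1 else 0) = (if Suc m = k then 1 else 0)"
  proof (cases k)
    case 0 then show ?thesis by (simp add: T_def)
  next
    case (Suc k')
    have "T = real (Suc k') * (\<Sum>i\<le>m. real_of_int (stirling1s m i) * real (Stirling i (Suc k')))
            + (\<Sum>i\<le>m. real_of_int (stirling1s m i) * real (Stirling i k'))"
      by (simp add: T_def Suc algebra_simps sum.distrib sum_distrib_left)
    then show ?thesis using Suc.IH[of k'] Suc.IH[of "Suc k'"] Suc by simp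
  qed
  finally show ?case .
qed

lemma F2': assumes "b \<le> n"
  shows "(\<Sum>i=k..n. real_of_int (stirling1s b i) * real (Stirling i k)) = (if b = k then 1 else 0)"
proof -
  have "(\<Sum>i=k..n. real_of_int (stirling1s b i) * real (Stirling i k))
      = (\<Sum>i\<le>n. real_of_int (stirling1s b i) * real (Stirling i k))"
    by (rule sum.mono_neutral_left) auto
  also have "\<dots> = (\<Sum>i\<le>b. real_of_int (stirling1s b i) * real (Stirling i k))"
    using assms by (intro sum.mono_neutral_right) (auto simp: s_gt)
  finally show ?thesis by (simp add: F2)
qed

lemma cancel: "(c::real) \<noteq> 0 \<Longrightarrow> x * (c * y) * z / c = x * y * z" by simp

lemma H:
  assumes "i \<ge> 1"
  shows "real_of_int (stirling1s n' (i - 1)) * real (Stirling i k) / real i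
    = fact n' * (\<Sum>a=0..Suc n'. (fps_X / fps_ln 1) $ a *
         (real_of_int (stirling1s (Suc n' - a) i) * real (Stirling i k) / fact (Suc n' - a)))"
proof -
  obtain i' where i: "i = Suc i'" using assms by (cases i) auto
  define G where "G = fps_X / fps_ln (1::real)"
  define L where "L = fps_ln (1::real)"
  have eq: "G * L ^ Suc i' = fps_X * L ^ i'"
    using GL by (simp add: G_def L_def mult.assoc[symmetric])
  have c1: "(L ^ i') $ n' = (G * L ^ Suc i') $ Suc n'" unfolding eq by simp
  have c2: "real_of_int (stirling1s n' i') = fact n' * (L ^ i') $ n' / fact i'"
    using F1[of n' i'] by (simp add: L_def field_simps)
  have c3: "(L ^ Suc i') $ b = fact (Suc i') * real_of_int (stirling1s b (Suc i')) / fact b" for b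
    using F1[of b "Suc i'"] by (simp add: L_def field_simps)
  have c4: "(G * L ^ Suc i') $ Suc n' = fact (Suc i') * (\<Sum>a=0..Suc n'. G $ a * (real_of_int (stirling1s (Suc n' - a) (Suc i')) / fact (Suc n' - a)))"
  proof -
    have "(G * L ^ Suc i') $ Suc n' = (\<Sum>a=0..Suc n'. G $ a * (L ^ Suc i') $ (Suc n' - a))"
      by (rule fps_mult_nth)
    also have "\<dots> = (\<Sum>a=0..Suc n'. fact (Suc i') * (G $ a * (real_of_int (stirling1s (Suc n' - a) (Suc i')) / fact (Suc n' - a))))"
      by (simp only: c3) (simp add: mult_ac)
    finally show ?thesis by (simp only: sum_distrib_left)
  qed
  have "real_of_int (stirling1s n' (i - 1)) * real (Stirling i k) / real i
     = fact n' * (G * L ^ Suc i') $ Suc n' * real (Stirling i k) / (fact i' * real (Suc i'))"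
    using c1 c2 i by simp
  also have "\<dots> = fact n' * (\<Sum>a=0..Suc n'. G $ a * (real_of_int (stirling1s (Suc n' - a) (Suc i')) / fact (Suc n' - a))) * real (Stirling i k)"
  proof -
    have ff: "fact i' * real (Suc i') = (fact (Suc i') :: real)" by (simp add: fact_Suc)
    have nz: "(fact (Suc i') :: real) \<noteq> 0" by simp
    show ?thesis unfolding c4 ff using nz by (rule cancel)
  qed
  also have "\<dots> = fact n' * (\<Sum>a=0..Suc n'. G $ a *
         (real_of_int (stirling1s (Suc n' - a) i) * real (Stirling i k) / fact (Suc n' - a)))"
    unfolding mult.assoc[of "fact n'"] sum_distrib_right by (intro arg_cong[where f="\<lambda>x. fact n' * x"] sum.cong) (simp_all add: i)
  finally show ?thesis by (simp add: G_def)
qed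

theorem theorem4:
  fixes n k :: nat
  assumes "k \<ge> 1" and "n \<ge> 1" and "n \<ge> k"
  shows "(\<Sum>i=k..n. real_of_int (stirling1s (n - 1) (i - 1)) * real (Stirling i k) / real i)
         = 1 / real n * real (n choose k) * bernoulli2 (n - k)"
proof -
  obtain n' where n: "n = Suc n'" using assms by (cases n) auto
  define G where "G = fps_X / fps_ln (1::real)"
  have "(\<Sum>i=k..n. real_of_int (stirling1s (n - 1) (i - 1)) * real (Stirling i k) / real i)
     = (\<Sum>i=k..n. fact n' * (\<Sum>a=0..n. G $ a *
         (real_of_int (stirling1s (n - a) i) * real (Stirling i k) / fact (n - a))))"
  proof (intro sum.cong refl)
    fix i assume "i \<in> {k..n}"
    then have "i \<ge> 1" using assms by simp
    from H[OF this, of n' k] show "real_of_int (stirling1s (n - 1) (i - 1)) * real (Stirling i k) / real i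
     = fact n' * (\<Sum>a=0..n. G $ a *
         (real_of_int (stirling1s (n - a) i) * real (Stirling i k) / fact (n - a)))"
      unfolding n G_def by simp
  qed
  also have "\<dots> = fact n' * (\<Sum>a=0..n. G $ a / fact (n - a) *
         (\<Sum>i=k..n. real_of_int (stirling1s (n - a) i) * real (Stirling i k)))"
    by (simp add: sum_distrib_left sum.swap[of _ "{k..n}"] mult_ac)
  also have "\<dots> = fact n' * (\<Sum>a=0..n. if a = n - k then G $ a / fact k else 0)"
    using assms by (intro arg_cong[where f="\<lambda>x. fact n' * x"] sum.cong) (auto simp: F2')
  also have "\<dots> = fact n' * (G $ (n - k) / fact k)"
    by simp
  also have "\<dots> = 1 / real n * real (n choose k) * bernoulli2 (n - k)"
  proof -
    have b: "real (n choose k) = fact n / (fact k * fact (n - k))"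
      using assms by (simp add: binomial_fact)
    have f: "(fact n :: real) = real n * fact n'" by (simp add: n fact_Suc)
    have gen: "\<And>a f b c g. (a::real) \<noteq> 0 \<Longrightarrow> b \<noteq> 0 \<Longrightarrow> c \<noteq> 0 \<Longrightarrow>
       1 / a * (a * f / (b * c)) * (c * g) = f * (g / b)" by (simp add: field_simps)
    show ?thesis unfolding bernoulli2_def b f G_def
      by (rule gen[symmetric]) (use n in auto)
  qed
  finally show ?thesis .
qed

end
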